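(* Let $g,n\ge1$ be integers and $\mathcal{A},\mathcal{B}\in\mathcal{D}_{g,n}$ weight data. (1) If $\mathcal{A}\le\mathcal{B}$, then $G^{(g,\mathcal{A})}\subset G^{(g,\mathcal{B})}$. (2) If $\mathcal{A}$ and $\mathcal{B}$ are in the same chamber, then $G^{(g,\mathcal{A})}=G^{(g,\mathcal{B})}$. (3) If $\mathcal{A}$ and $\mathcal{B}$ are obtained one from the other through a permutation of coordinates, then $G^{(g,\mathcal{A})}$ is isomorphic to $G^{(g,\mathcal{B})}$. (4) If $\mathcal{A}$ and $\mathcal{B}$ are in chambers $Ch_1$ and $Ch_2$ with $[Ch_1]=[Ch_2]$ (i.e. in the same $S_n$-orbit), then $G^{(g,\mathcal{A})}$ is isomorphic to $G^{(g,\mathcal{B})}$.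
   Context: A weight datum is $\mathcal{A}=(a_1,\dots,a_n)$ with $a_i\in\mathbb{Q}\cap(0,1]$ and $2g-2+\sum_i a_i>0$; $\mathcal{D}_{g,n}\subset\mathbb{R}^n$ is the set of weight data; $\mathcal{A}\le\mathcal{B}$ means $a_i\le b_i$ for all $i$. For $S\subseteq\{1,\dots,n\}$ with $2\le|S|\le n$, the wall $w_S$ is the locus $\sum_{i\in S}a_i=1$; chambers are the connected components of the complement in $\mathcal{D}_{g,n}$ of all walls. $S_n$ acts by permuting coordinates, and $[Ch]$ denotes the $S_n$-orbit of a chamber. A $(g,\mathcal{A})$-stable graph is a finite connected graph $G$ (loops and multiple edges allowed) with vertex weight $w:V(G)\to\mathbb{Z}_{\ge0}$ and $n$ legs labelled $1,\dots,n$ attached via $m:\{1,\dots,n\}\to V(G)$, with $b_1(G)+\sum_v w(v)=g$ and $2w(v)-2+|v|_E+|v|_{\mathcal{A}}>0$ for every vertex $v$, where $|v|_E$ is the number of edge half-edges at $v$ (loops counted twice) and $|v|_{\mathcal{A}}=\sum_{m(i)=v}a_i$. The graph complex $G^{(g,\mathcal{A})}$ is the chain complex of rational vector spaces generated by pairs $[\mathbf{G},\omega]$, where $\mathbf{G}$ is a $(g,\mathcal{A})$-stable graph and $\omega$ a total order of its edges, subject to $[\mathbf{G},\omega]=\mathrm{sgn}(\sigma)[\mathbf{G}',\omega']$ whenever there is an isomorphism of $n$-marked weighted graphs $\mathbf{G}\cong\mathbf{G}'$ under which $\omega,\omega'$ differ by $\sigma\in S_{|E(\mathbf{G})|}$;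 it is graded by the number of edges, with differential the signed sum of the contractions of the non-loop edges. *)

theory Defs
  imports "HOL-Analysis.Analysis" "HOL-Combinatorics.Permutations"
begin

text \<open>Legs are labelled by a finite type 'n (n = CARD('n)).
  A weight datum is a function 'n => rat.\<close>

definition weight_datum :: "nat \<Rightarrow> ('n::finite \<Rightarrow> rat) \<Rightarrow> bool" where
  "weight_datum g A \<longleftrightarrow> (\<forall>i. 0 < A i \<and> A i \<le> 1) \<and> 2 * of_nat g - 2 + (\<Sum>i\<in>UNIV. A i) > 0"

definition wd_le :: "('n::finite \<Rightarrow> rat) \<Rightarrow> ('n \<Rightarrow> rat) \<Rightarrow> bool" where
  "wd_le A B \<longleftrightarrow> (\<forall>i. A i \<le> B i)"

definition emb :: "('n::finite \<Rightarrow> rat) \<Rightarrow> real^'n" where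
  "emb A = (\<chi> i. of_rat (A i))"

text \<open>The real region underlying D_{g,n} (so that chambers are honest
  connected components in R^n).\<close>
definition D_real :: "nat \<Rightarrow> (real^'n::finite) set" where
  "D_real g = {x. (\<forall>i. 0 < x $ i \<and> x $ i \<le> 1) \<and> 2 * real g - 2 + (\<Sum>i\<in>UNIV. x $ i) > 0}"

definition walls :: "(real^'n::finite) set" where
  "walls = {x. \<exists>S::'n set. 2 \<le> card S \<and> (\<Sum>i\<in>S. x $ i) = 1}"

definition chambers :: "nat \<Rightarrow> (real^'n::finite) set set" where
  "chambers g = components (D_real g - walls)"

definition in_chamber :: "nat \<Rightarrow> ('n::finite \<Rightarrow> rat) \<Rightarrow> (real^'n) set \<Rightarrow> bool" where
  "in_chamber g A Ch \<longleftrightarrow> Ch \<in> chambers g \<and> emb A \<in> Ch"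

definition perm_vec :: "('n::finite \<Rightarrow> 'n) \<Rightarrow> real^'n \<Rightarrow> real^'n" where
  "perm_vec \<sigma> x = (\<chi> i. x $ (\<sigma> i))"

text \<open>A pair [G,omega]: (vertex weights, edge list, leg map). Vertices are
  0..<length ws; the edge list order is the total order omega on edges;
  edge (a,b) joins a and b (a = b is a loop); leg i is attached at m i.\<close>
type_synonym 'n ograph = "nat list \<times> (nat \<times> nat) list \<times> ('n \<Rightarrow> nat)"

definition edge_rel :: "(nat \<times> nat) list \<Rightarrow> (nat \<times> nat) set" where
  "edge_rel es = {(a,b). (a,b) \<in> set es \<or> (b,a) \<in> set es}"

definition valence :: "(nat \<times> nat) list \<Rightarrow> nat \<Rightarrow> nat" where
  "valence es v = (\<Sum>e\<leftarrow>es. (if fst e = v then 1 else 0) + (if snd e = v then 1 else 0))"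

text \<open>Connected graph of genus g: b_1(G) + sum of weights = g.\<close>
definition wf_graph :: "nat \<Rightarrow> ('n::finite) ograph \<Rightarrow> bool" where
  "wf_graph g x = (case x of (ws, es, m) \<Rightarrow>
     ws \<noteq> [] \<and> (\<forall>e\<in>set es. fst e < length ws \<and> snd e < length ws)
     \<and> (\<forall>i. m i < length ws)
     \<and> (\<forall>u<length ws. \<forall>v<length ws. (u,v) \<in> (edge_rel es)\<^sup>*)
     \<and> length es + 1 + sum_list ws = length ws + g)"

definition stable_graph :: "nat \<Rightarrow> ('n::finite \<Rightarrow> rat) \<Rightarrow> 'n ograph \<Rightarrow> bool" where
  "stable_graph g A x = (wf_graph g x \<and> (case x of (ws, es, m) \<Rightarrow>
     (\<forall>v<length ws. 2 * of_nat (ws ! v) - 2 + of_nat (valence es v) + (\<Sum>i\<in>{i. m i = v}. A i) > (0::rat))))"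

definition deg :: "'n ograph \<Rightarrow> nat" where
  "deg x = length (fst (snd x))"

text \<open>Isomorphism of n-marked weighted graphs: vertex bijection pi and edge
  bijection sigma (sigma also measures how the edge orders differ).\<close>
definition graph_iso :: "'n ograph \<Rightarrow> 'n ograph \<Rightarrow> (nat \<Rightarrow> nat) \<Rightarrow> (nat \<Rightarrow> nat) \<Rightarrow> bool" where
  "graph_iso x y \<pi> \<sigma> = (case x of (ws, es, m) \<Rightarrow> case y of (ws', es', m') \<Rightarrow>
     length ws' = length ws \<and> length es' = length es
     \<and> \<pi> permutes {..<length ws} \<and> \<sigma> permutes {..<length es}
     \<and> (\<forall>v<length ws. ws' ! (\<pi> v) = ws ! v)
     \<and> (\<forall>i. m' i = \<pi> (m i))
     \<and> (\<forall>j<length es. es' ! (\<sigma> j) = (\<pi> (fst (es!j)), \<pi> (snd (es!j)))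
                      \<or> es' ! (\<sigma> j) = (\<pi> (snd (es!j)), \<pi> (fst (es!j)))))"

definition remove_nth :: "nat \<Rightarrow> 'a list \<Rightarrow> 'a list" where
  "remove_nth i xs = take i xs @ drop (Suc i) xs"

text \<open>Contraction of the j-th edge (a,b), a ~= b: b is merged into a.\<close>
definition contract :: "'n ograph \<Rightarrow> nat \<Rightarrow> 'n ograph" where
  "contract x j = (case x of (ws, es, m) \<Rightarrow>
     let a = fst (es ! j); b = snd (es ! j);
         r = (\<lambda>v. let u = (if v = b then a else v) in if u > b then u - 1 else u)
     in (remove_nth b (ws[a := ws ! a + ws ! b]),
         map (\<lambda>(p,q). (r p, r q)) (remove_nth j es),
         r \<circ> m))"

definition delta :: "'a \<Rightarrow> 'a \<Rightarrow> rat" where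
  "delta x = (\<lambda>z. if z = x then 1 else 0)"

definition lin_span :: "('a \<Rightarrow> rat) set \<Rightarrow> ('a \<Rightarrow> rat) set" where
  "lin_span S = {f. \<exists>L. set (map snd L) \<subseteq> S \<and> f = (\<lambda>z. sum_list (map (\<lambda>(c,v). c * v z) L))}"

definition rel_vecs :: "nat \<Rightarrow> ('n::finite ograph \<Rightarrow> rat) set" where
  "rel_vecs g = {(\<lambda>z. delta x z - of_int (sign \<sigma>) * delta y z) | x y \<pi> \<sigma>.
                   wf_graph g x \<and> graph_iso x y \<pi> \<sigma>}"

definition Rel :: "nat \<Rightarrow> ('n::finite ograph \<Rightarrow> rat) set" where
  "Rel g = lin_span (rel_vecs g)"

definition coset :: "('a \<Rightarrow> rat) set \<Rightarrow> ('a \<Rightarrow> rat) \<Rightarrow> ('a \<Rightarrow> rat) set" where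
  "coset R f = {h. \<exists>r\<in>R. h = (\<lambda>z. f z + r z)}"

definition rep :: "('a \<Rightarrow> rat) set \<Rightarrow> 'a \<Rightarrow> rat" where
  "rep X = (SOME f. f \<in> X)"

definition addQ :: "nat \<Rightarrow> ('n::finite ograph \<Rightarrow> rat) set \<Rightarrow> ('n ograph \<Rightarrow> rat) set \<Rightarrow> ('n ograph \<Rightarrow> rat) set" where
  "addQ g X Y = coset (Rel g) (\<lambda>z. rep X z + rep Y z)"

definition smulQ :: "nat \<Rightarrow> rat \<Rightarrow> ('n::finite ograph \<Rightarrow> rat) set \<Rightarrow> ('n ograph \<Rightarrow> rat) set" where
  "smulQ g c X = coset (Rel g) (\<lambda>z. c * rep X z)"

definition dgen :: "'n ograph \<Rightarrow> 'n ograph \<Rightarrow> rat" where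
  "dgen x y = (\<Sum>j<deg x. if fst (fst (snd x) ! j) \<noteq> snd (fst (snd x) ! j) \<and> contract x j = y
                          then (-1) ^ j else 0)"

definition dfree :: "('n ograph \<Rightarrow> rat) \<Rightarrow> 'n ograph \<Rightarrow> rat" where
  "dfree f = (\<lambda>y. \<Sum>x\<in>{x. f x \<noteq> 0}. f x * dgen x y)"

definition dQ :: "nat \<Rightarrow> ('n::finite ograph \<Rightarrow> rat) set \<Rightarrow> ('n ograph \<Rightarrow> rat) set" where
  "dQ g X = coset (Rel g) (dfree (rep X))"

text \<open>Degree-k part of the graph complex G^(g,A), realised inside the
  quotient of the free space on all connected genus-g n-marked graphs.\<close>
definition GC :: "nat \<Rightarrow> ('n::finite \<Rightarrow> rat) \<Rightarrow> nat \<Rightarrow> ('n ograph \<Rightarrow> rat) set set" where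
  "GC g A k = {coset (Rel g) f | f. f \<in> lin_span (delta ` {x. stable_graph g A x \<and> deg x = k})}"

definition GC_subcomplex :: "nat \<Rightarrow> ('n::finite \<Rightarrow> rat) \<Rightarrow> ('n \<Rightarrow> rat) \<Rightarrow> bool" where
  "GC_subcomplex g A B \<longleftrightarrow> (\<forall>k. GC g A k \<subseteq> GC g B k)"

definition GC_iso :: "nat \<Rightarrow> ('n::finite \<Rightarrow> rat) \<Rightarrow> ('n \<Rightarrow> rat) \<Rightarrow> bool" where
  "GC_iso g A B \<longleftrightarrow> (\<exists>\<Phi>. \<forall>k.
     bij_betw (\<Phi> k) (GC g A k) (GC g B k)
     \<and> (\<forall>X\<in>GC g A k. \<forall>Y\<in>GC g A k. \<Phi> k (addQ g X Y) = addQ g (\<Phi> k X) (\<Phi> k Y))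
     \<and> (\<forall>c. \<forall>X\<in>GC g A k. \<Phi> k (smulQ g c X) = smulQ g c (\<Phi> k X))
     \<and> (\<forall>X\<in>GC g A (Suc k). \<Phi> k (dQ g X) = dQ g (\<Phi> (Suc k) X)))"

end

theory Submission
  imports Defs
begin


definition fin :: "('a \<Rightarrow> rat) \<Rightarrow> bool" where
  "fin f \<longleftrightarrow> finite {z. f z \<noteq> 0}"

lemma lin_span_zero: "(\<lambda>z. 0) \<in> lin_span S"
  unfolding lin_span_def by (rule CollectI, rule exI[of _ "[]"]) auto

lemma lin_span_gen: "v \<in> S \<Longrightarrow> v \<in> lin_span S"
  unfolding lin_span_def by (rule CollectI, rule exI[of _ "[(1,v)]"]) auto

lemma lin_span_add: "f \<in> lin_span S \<Longrightarrow> h \<in> lin_span S \<Longrightarrow> (\<lambda>z. f z + h z) \<in> lin_span S"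
proof -
  assume "f \<in> lin_span S" "h \<in> lin_span S"
  then obtain L1 L2 where L: "set (map snd L1) \<subseteq> S" "f = (\<lambda>z. sum_list (map (\<lambda>(c,v). c * v z) L1))"
     "set (map snd L2) \<subseteq> S" "h = (\<lambda>z. sum_list (map (\<lambda>(c,v). c * v z) L2))"
    unfolding lin_span_def by blast
  show ?thesis unfolding lin_span_def
    by (rule CollectI, rule exI[of _ "L1 @ L2"]) (use L in auto)
qed

lemma lin_span_smult: "f \<in> lin_span S \<Longrightarrow> (\<lambda>z. c * f z) \<in> lin_span S"
proof -
  assume "f \<in> lin_span S"
  then obtain L where L: "set (map snd L) \<subseteq> S" "f = (\<lambda>z. sum_list (map (\<lambda>(c,v). c * v z) L))"
    unfolding lin_span_def by blast
  have "(\<lambda>z. c * f z) = (\<lambda>z. sum_list (map (\<lambda>(d,v). d * v z) (map (\<lambda>(d,v). (c*d, v)) L)))"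
    unfolding L(2) by (rule ext, induction L) (auto simp: algebra_simps)
  moreover have "set (map snd (map (\<lambda>(d,v). (c*d, v)) L)) \<subseteq> S" using L(1) by auto
  ultimately show ?thesis unfolding lin_span_def by blast
qed

lemma lin_span_diff: "f \<in> lin_span S \<Longrightarrow> h \<in> lin_span S \<Longrightarrow> (\<lambda>z. f z - h z) \<in> lin_span S"
  using lin_span_add[of f S "\<lambda>z. (-1) * h z"] lin_span_smult[of h S "-1"] by simp

lemma lin_span_sum: "finite I \<Longrightarrow> (\<And>j. j \<in> I \<Longrightarrow> t j \<in> lin_span S) \<Longrightarrow> (\<lambda>z. \<Sum>j\<in>I. t j z) \<in> lin_span S"
proof (induction I rule: finite_induct)
  case empty then show ?case using lin_span_zero by simp
next
  case (insert x F)
  then show ?case using lin_span_add[of "t x" S "\<lambda>z. \<Sum>j\<in>F. t j z"] by simp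
qed

lemma lin_span_mono: "S \<subseteq> T \<Longrightarrow> lin_span S \<subseteq> lin_span T"
  unfolding lin_span_def by blast

lemma lin_span_comp: "f \<in> lin_span S \<Longrightarrow> (\<lambda>z. f (\<rho> z)) \<in> lin_span ((\<lambda>v z. v (\<rho> z)) ` S)"
proof -
  assume "f \<in> lin_span S"
  then obtain L where L: "set (map snd L) \<subseteq> S" "f = (\<lambda>z. sum_list (map (\<lambda>(c,v). c * v z) L))"
    unfolding lin_span_def by blast
  have "(\<lambda>z. f (\<rho> z)) = (\<lambda>z. sum_list (map (\<lambda>(d,v). d * v z) (map (\<lambda>(d,v). (d, \<lambda>z. v (\<rho> z))) L)))"
    unfolding L(2) by (rule ext, induction L) auto
  moreover have "set (map snd (map (\<lambda>(d,v). (d, \<lambda>z. v (\<rho> z))) L)) \<subseteq> (\<lambda>v z. v (\<rho> z)) ` S" using L(1) by auto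
  ultimately show ?thesis unfolding lin_span_def by blast
qed

lemma fin_lin_span: "(\<And>v. v \<in> S \<Longrightarrow> fin v) \<Longrightarrow> f \<in> lin_span S \<Longrightarrow> fin f"
proof -
  assume S: "\<And>v. v \<in> S \<Longrightarrow> fin v" and "f \<in> lin_span S"
  then obtain L where L: "set (map snd L) \<subseteq> S" "f = (\<lambda>z. sum_list (map (\<lambda>(c,v). c * v z) L))"
    unfolding lin_span_def by blast
  have "fin (\<lambda>z. sum_list (map (\<lambda>(c,v). c * v z) L))" using L(1)
  proof (induction L)
    case Nil then show ?case by (simp add: fin_def)
  next
    case (Cons a L)
    obtain c v where a: "a = (c,v)" by force
    have "fin v" using Cons.prems a S by auto
    have "fin (\<lambda>z. sum_list (map (\<lambda>(c,v). c * v z) L))" using Cons by auto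
    then have "finite ({z. v z \<noteq> 0} \<union> {z. sum_list (map (\<lambda>(c,v). c * v z) L) \<noteq> 0})"
      using \<open>fin v\<close> by (simp add: fin_def)
    then show ?case unfolding fin_def a
      by (rule rev_finite_subset) auto
  qed
  then show ?thesis using L(2) by simp
qed

lemma fin_delta: "fin (delta x)"
  unfolding fin_def delta_def by simp

lemma fin_add: "fin f \<Longrightarrow> fin h \<Longrightarrow> fin (\<lambda>z. f z + h z)"
  unfolding fin_def by (rule rev_finite_subset[of "{z. f z \<noteq> 0} \<union> {z. h z \<noteq> 0}"]) auto

lemma fin_rel: "v \<in> rel_vecs g \<Longrightarrow> fin v"
  unfolding rel_vecs_def fin_def delta_def
  by (auto intro: rev_finite_subset[of "{_, _}"])

lemma fin_Rel: "r \<in> Rel g \<Longrightarrow> fin r"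
  unfolding Rel_def using fin_lin_span fin_rel by blast




lemma Rel_zero: "(\<lambda>z. 0) \<in> Rel g" unfolding Rel_def by (rule lin_span_zero)
lemma Rel_add: "f \<in> Rel g \<Longrightarrow> h \<in> Rel g \<Longrightarrow> (\<lambda>z. f z + h z) \<in> Rel g"
  unfolding Rel_def by (rule lin_span_add)
lemma Rel_diff: "f \<in> Rel g \<Longrightarrow> h \<in> Rel g \<Longrightarrow> (\<lambda>z. f z - h z) \<in> Rel g"
  unfolding Rel_def by (rule lin_span_diff)
lemma Rel_smult: "f \<in> Rel g \<Longrightarrow> (\<lambda>z. c * f z) \<in> Rel g"
  unfolding Rel_def by (rule lin_span_smult)

lemma coset_self: "f \<in> coset (Rel g) f"
  unfolding coset_def using Rel_zero by fastforce

lemma coset_eq: "(\<lambda>z. f z - h z) \<in> Rel g \<Longrightarrow> coset (Rel g) f = coset (Rel g) h"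
proof -
  assume d: "(\<lambda>z. f z - h z) \<in> Rel g"
  have d2: "(\<lambda>z. h z - f z) \<in> Rel g" using Rel_smult[OF d, of "-1"] by simp
  show ?thesis
  proof (intro set_eqI iffI)
    fix k assume "k \<in> coset (Rel g) f"
    then obtain r where r: "r \<in> Rel g" "k = (\<lambda>z. f z + r z)" unfolding coset_def by blast
    have "(\<lambda>z. (f z - h z) + r z) \<in> Rel g" using Rel_add[OF d r(1)] .
    then show "k \<in> coset (Rel g) h" unfolding coset_def r(2)
      by (intro CollectI bexI[of _ "\<lambda>z. (f z - h z) + r z"]) auto
  next
    fix k assume "k \<in> coset (Rel g) h"
    then obtain r where r: "r \<in> Rel g" "k = (\<lambda>z. h z + r z)" unfolding coset_def by blast
    have "(\<lambda>z. (h z - f z) + r z) \<in> Rel g" using Rel_add[OF d2 r(1)] .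
    then show "k \<in> coset (Rel g) f" unfolding coset_def r(2)
      by (intro CollectI bexI[of _ "\<lambda>z. (h z - f z) + r z"]) auto
  qed
qed

lemma coset_eq_iff: "coset (Rel g) f = coset (Rel g) h \<longleftrightarrow> (\<lambda>z. f z - h z) \<in> Rel g"
proof
  assume "coset (Rel g) f = coset (Rel g) h"
  then have "f \<in> coset (Rel g) h" using coset_self by metis
  then obtain r where r: "r \<in> Rel g" "f = (\<lambda>z. h z + r z)" unfolding coset_def by blast
  then show "(\<lambda>z. f z - h z) \<in> Rel g" by simp
qed (rule coset_eq)

lemma rep_coset: "(\<lambda>z. rep (coset (Rel g) f) z - f z) \<in> Rel g"
proof -
  have "rep (coset (Rel g) f) \<in> coset (Rel g) f" unfolding rep_def using coset_self by (metis someI)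
  then obtain r where r: "r \<in> Rel g" "rep (coset (Rel g) f) = (\<lambda>z. f z + r z)" unfolding coset_def by blast
  then show ?thesis by simp
qed

lemma coset_rep: "coset (Rel g) (rep (coset (Rel g) f)) = coset (Rel g) f"
  by (rule coset_eq[OF rep_coset])

lemma fin_coset_rep: "fin f \<Longrightarrow> fin (rep (coset (Rel g) f))"
proof -
  assume "fin f"
  have "fin (\<lambda>z. rep (coset (Rel g) f) z - f z)" by (rule fin_Rel[OF rep_coset])
  from fin_add[OF this \<open>fin f\<close>] show ?thesis by simp
qed

lemma dfree_eq: "finite F \<Longrightarrow> {z. f z \<noteq> 0} \<subseteq> F \<Longrightarrow> dfree f y = (\<Sum>z\<in>F. f z * dgen z y)"
  unfolding dfree_def by (rule sum.mono_neutral_left) auto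

lemma dfree_add: "fin f \<Longrightarrow> fin h \<Longrightarrow> dfree (\<lambda>z. f z + h z) = (\<lambda>y. dfree f y + dfree h y)"
proof
  fix y assume f: "fin f" and h: "fin h"
  let ?F = "{z. f z \<noteq> 0} \<union> {z. h z \<noteq> 0}"
  have fF: "finite ?F" using f h unfolding fin_def by simp
  have "dfree (\<lambda>z. f z + h z) y = (\<Sum>z\<in>?F. (f z + h z) * dgen z y)"
    by (rule dfree_eq[OF fF]) auto
  also have "\<dots> = (\<Sum>z\<in>?F. f z * dgen z y) + (\<Sum>z\<in>?F. h z * dgen z y)"
    by (simp add: distrib_right sum.distrib)
  also have "\<dots> = dfree f y + dfree h y"
    using dfree_eq[OF fF, of f y] dfree_eq[OF fF, of h y] by auto
  finally show "dfree (\<lambda>z. f z + h z) y = dfree f y + dfree h y" .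
qed

lemma dfree_smult: "fin f \<Longrightarrow> dfree (\<lambda>z. c * f z) = (\<lambda>y. c * dfree f y)"
proof
  fix y assume f: "fin f"
  let ?F = "{z. f z \<noteq> 0}"
  have fF: "finite ?F" using f unfolding fin_def by simp
  have "dfree (\<lambda>z. c * f z) y = (\<Sum>z\<in>?F. (c * f z) * dgen z y)"
    by (rule dfree_eq[OF fF]) auto
  also have "\<dots> = c * (\<Sum>z\<in>?F. f z * dgen z y)"
    by (simp add: sum_distrib_left mult.assoc)
  also have "\<dots> = c * dfree f y"
    using dfree_eq[OF fF, of f y] by auto
  finally show "dfree (\<lambda>z. c * f z) y = c * dfree f y" .
qed

lemma dfree_zero: "dfree (\<lambda>z. 0) = (\<lambda>y. 0)"
  unfolding dfree_def by simp

lemma dfree_lin_span: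
  assumes S: "\<And>v. v \<in> S \<Longrightarrow> fin v \<and> dfree v \<in> lin_span T"
    and f: "f \<in> lin_span S"
  shows "dfree f \<in> lin_span T"
proof -
  obtain L where L: "set (map snd L) \<subseteq> S" "f = (\<lambda>z. sum_list (map (\<lambda>(c,v). c * v z) L))"
    using f unfolding lin_span_def by blast
  have "dfree (\<lambda>z. sum_list (map (\<lambda>(c,v). c * v z) L)) \<in> lin_span T" using L(1)
  proof (induction L)
    case Nil then show ?case by (simp add: dfree_zero lin_span_zero)
  next
    case (Cons a L)
    obtain c v where a: "a = (c,v)" by force
    have v: "v \<in> S" using Cons.prems a by auto
    have Ls: "set (map snd L) \<subseteq> S" using Cons.prems by auto
    have fr: "fin (\<lambda>z. sum_list (map (\<lambda>(c,v). c * v z) L))"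
      using fin_lin_span[of S] S Ls unfolding lin_span_def by blast
    have fv: "fin (\<lambda>z. c * v z)" using S[OF v] unfolding fin_def by (auto elim: rev_finite_subset)
    have "dfree (\<lambda>z. sum_list (map (\<lambda>(c,v). c * v z) (a # L)))
        = dfree (\<lambda>z. c * v z + sum_list (map (\<lambda>(c,v). c * v z) L))" by (simp add: a)
    also have "\<dots> = (\<lambda>y. c * dfree v y + dfree (\<lambda>z. sum_list (map (\<lambda>(c,v). c * v z) L)) y)"
      using dfree_add[OF fv fr] dfree_smult[of v c] S[OF v] by simp
    finally show ?case using lin_span_add[OF lin_span_smult Cons.IH[OF Ls]] S[OF v] by simp
  qed
  then show ?thesis using L(2) by simp
qed




definition insn :: "nat \<Rightarrow> nat \<Rightarrow> nat" where "insn t k = (if k < t then k else Suc k)"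
definition deln :: "nat \<Rightarrow> nat \<Rightarrow> nat" where "deln t k = (if k < t then k else k - 1)"

lemma insn_deln: "v \<noteq> t \<Longrightarrow> insn t (deln t v) = v"
  unfolding insn_def deln_def by auto
lemma deln_insn: "deln t (insn t k) = k"
  unfolding insn_def deln_def by auto
lemma insn_neq: "insn t k \<noteq> t"
  unfolding insn_def by auto
lemma insn_lt: "k < N - 1 \<Longrightarrow> insn t k < N"
  unfolding insn_def by auto
lemma deln_lt: "v < N \<Longrightarrow> t < N \<Longrightarrow> v \<noteq> t \<Longrightarrow> deln t v < N - 1"
  unfolding deln_def by auto

lemma length_remove_nth: "t < length xs \<Longrightarrow> length (remove_nth t xs) = length xs - 1"
  unfolding remove_nth_def by simp

lemma nth_remove_nth: "t < length xs \<Longrightarrow> i < length xs - 1 \<Longrightarrow> remove_nth t xs ! i = xs ! insn t i"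
  unfolding remove_nth_def insn_def by (auto simp: nth_append min_def)


definition cyc :: "nat \<Rightarrow> nat \<Rightarrow> nat \<Rightarrow> nat" where
  "cyc N t k = (if k < N - 1 then insn t k else if k = N - 1 then t else k)"

lemma cyc_last: "cyc N (N - 1) = id"
  unfolding cyc_def insn_def by (auto simp: fun_eq_iff)

lemma cyc_step: "Suc t < N \<Longrightarrow> cyc N t = Transposition.transpose t (Suc t) \<circ> cyc N (Suc t)"
  unfolding cyc_def insn_def
  apply (rule ext)
  subgoal for k by (cases "k = t"; cases "k = Suc t") (auto simp: transpose_def)
  done

lemma cyc_sign: "t < N \<Longrightarrow> permutation (cyc N t) \<and> sign (cyc N t) = (-1) ^ (N - 1 - t)"
proof (induction "N - 1 - t" arbitrary: t)
  case 0
  then have "t = N - 1" by simp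
  then show ?case using cyc_last by (simp add: permutation_id)
next
  case (Suc d)
  then have st: "Suc t < N" by simp
  have ih: "permutation (cyc N (Suc t)) \<and> sign (cyc N (Suc t)) = (-1) ^ d"
  proof -
    have dd: "d = N - 1 - Suc t" using Suc.hyps(2) by simp
    show ?thesis using Suc.hyps(1)[OF dd] st dd by simp
  qed
  have "permutation (cyc N t)" unfolding cyc_step[OF st]
    by (rule permutation_compose[OF permutation_swap_id conjunct1[OF ih]])
  moreover have "sign (cyc N t) = (-1) ^ Suc d" unfolding cyc_step[OF st]
    using ih st by (simp add: sign_compose[OF permutation_swap_id conjunct1[OF ih]] sign_swap_id)
  ultimately show ?case using Suc.hyps(2) by simp
qed

lemma cyc_permutes: "t < N \<Longrightarrow> cyc N t permutes {..<N}"
proof -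
  assume t: "t < N"
  have "permutation (cyc N t)" using cyc_sign[OF t] by blast
  then have "bij (cyc N t)" by (rule permutation_bijective)
  then have p: "cyc N t permutes UNIV" by (rule bij_imp_permutes) simp
  have nm: "N - 1 < N" using t by simp
  show ?thesis
    by (rule permutes_superset[OF p]) (use t nm in \<open>auto simp: cyc_def\<close>)
qed

lemma perm_lt: "\<sigma> permutes {..<N} \<Longrightarrow> x < N \<Longrightarrow> \<sigma> x < N"
  using permutes_in_image[of \<sigma> "{..<N}" x] by simp

definition sig' :: "(nat \<Rightarrow> nat) \<Rightarrow> nat \<Rightarrow> nat \<Rightarrow> nat \<Rightarrow> nat" where
  "sig' \<sigma> N j = (\<lambda>k. if k < N - 1 then deln (\<sigma> j) (\<sigma> (insn j k)) else k)"

lemma sig'_lt: "\<sigma> permutes {..<N} \<Longrightarrow> j < N \<Longrightarrow> k < N - 1 \<Longrightarrow> sig' \<sigma> N j k < N - 1"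
proof -
  assume s: "\<sigma> permutes {..<N}" and j: "j < N" and k: "k < N - 1"
  have i: "insn j k < N" using insn_lt[OF k] .
  have ne: "\<sigma> (insn j k) \<noteq> \<sigma> j" using insn_neq permutes_inj[OF s, THEN injD] by metis
  have "deln (\<sigma> j) (\<sigma> (insn j k)) < N - 1"
    by (rule deln_lt) (use s i j ne perm_lt in \<open>auto\<close>)
  then show ?thesis unfolding sig'_def using k by simp
qed

lemma sig'_insn: "\<sigma> permutes {..<N} \<Longrightarrow> j < N \<Longrightarrow> k < N - 1 \<Longrightarrow> insn (\<sigma> j) (sig' \<sigma> N j k) = \<sigma> (insn j k)"
proof -
  assume s: "\<sigma> permutes {..<N}" and j: "j < N" and k: "k < N - 1"
  have ne: "\<sigma> (insn j k) \<noteq> \<sigma> j" using insn_neq permutes_inj[OF s, THEN injD] by metis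
  show ?thesis unfolding sig'_def using k insn_deln[OF ne] by simp
qed

lemma sig'_conj: assumes s: "\<sigma> permutes {..<N}" and j: "j < N"
  shows "\<sigma> \<circ> cyc N j = cyc N (\<sigma> j) \<circ> sig' \<sigma> N j"
proof
  fix k
  show "(\<sigma> \<circ> cyc N j) k = (cyc N (\<sigma> j) \<circ> sig' \<sigma> N j) k"
  proof (cases "k < N - 1")
    case True
    then show ?thesis using sig'_lt[OF s j True] sig'_insn[OF s j True]
      by (simp add: cyc_def)
  next
    case False
    then show ?thesis using s j unfolding cyc_def sig'_def
      by (auto simp: permutes_not_in)
  qed
qed

lemma sig'_sign: assumes s: "\<sigma> permutes {..<N}" and j: "j < N"
  shows "sig' \<sigma> N j permutes {..<N - 1} \<and> sign (sig' \<sigma> N j) = sign \<sigma> * (-1) ^ (j + \<sigma> j)"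
proof -
  have sj: "\<sigma> j < N" using s j by (rule perm_lt)
  have c1: "cyc N j permutes {..<N}" and c2: "cyc N (\<sigma> j) permutes {..<N}"
    using cyc_permutes j sj by auto
  have e: "sig' \<sigma> N j = inv (cyc N (\<sigma> j)) \<circ> \<sigma> \<circ> cyc N j"
  proof -
    have "inv (cyc N (\<sigma> j)) \<circ> \<sigma> \<circ> cyc N j = inv (cyc N (\<sigma> j)) \<circ> (\<sigma> \<circ> cyc N j)"
      by (simp add: o_assoc)
    also have "\<dots> = (inv (cyc N (\<sigma> j)) \<circ> cyc N (\<sigma> j)) \<circ> sig' \<sigma> N j"
      unfolding sig'_conj[OF s j] by (simp add: o_assoc)
    also have "\<dots> = sig' \<sigma> N j" using permutes_inv_o(2)[OF c2] by simp
    finally show ?thesis by simp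
  qed
  have p: "sig' \<sigma> N j permutes {..<N}" unfolding e
    by (intro permutes_compose permutes_inv c1 c2 s)
  have p': "sig' \<sigma> N j permutes {..<N - 1}"
    by (rule permutes_superset[OF p]) (auto simp: sig'_def)
  have pe: "permutation \<sigma>" "permutation (sig' \<sigma> N j)" "permutation (cyc N j)" "permutation (cyc N (\<sigma> j))"
    using s p c1 c2 by (auto simp: permutation_permutes)
  have "sign \<sigma> * sign (cyc N j) = sign (cyc N (\<sigma> j)) * sign (sig' \<sigma> N j)"
    using arg_cong[OF sig'_conj[OF s j], of sign] pe by (simp add: sign_compose)
  then have "sign \<sigma> * (-1) ^ (N - 1 - j) = (-1) ^ (N - 1 - \<sigma> j) * sign (sig' \<sigma> N j)"
    using cyc_sign j sj by simp
  then have "sign (sig' \<sigma> N j) = sign \<sigma> * (-1) ^ (N - 1 - j) * (-1) ^ (N - 1 - \<sigma> j)"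
  proof -
    assume h: "sign \<sigma> * (-1) ^ (N - 1 - j) = (-1) ^ (N - 1 - \<sigma> j) * sign (sig' \<sigma> N j)"
    have uu: "(-1::int) ^ (N - 1 - \<sigma> j) * (-1) ^ (N - 1 - \<sigma> j) = 1"
      by (simp add: left_minus_one_mult_self)
    have "sign (sig' \<sigma> N j) = ((-1::int) ^ (N - 1 - \<sigma> j) * (-1) ^ (N - 1 - \<sigma> j)) * sign (sig' \<sigma> N j)"
      using uu by simp
    also have "\<dots> = (-1) ^ (N - 1 - \<sigma> j) * ((-1) ^ (N - 1 - \<sigma> j) * sign (sig' \<sigma> N j))"
      by (simp only: mult.assoc)
    also have "\<dots> = (-1) ^ (N - 1 - \<sigma> j) * (sign \<sigma> * (-1) ^ (N - 1 - j))"
      using h by simp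
    finally show ?thesis by (simp only: mult.commute mult.left_commute)
  qed
  also have "\<dots> = sign \<sigma> * (-1) ^ (j + \<sigma> j)"
  proof -
    have "(N - 1 - j) + (N - 1 - \<sigma> j) + (j + \<sigma> j) = 2 * (N - 1)" using j sj by simp
    then have "(-1::int) ^ ((N - 1 - j) + (N - 1 - \<sigma> j)) * (-1) ^ (j + \<sigma> j) = 1"
      by (metis power_add power_mult neg_one_even_power even_mult_iff even_numeral)
    then have "(-1::int) ^ ((N - 1 - j) + (N - 1 - \<sigma> j)) = (-1) ^ (j + \<sigma> j)"
      by (metis left_minus_one_mult_self mult.commute mult_1 power_add)
    then show ?thesis by (simp add: power_add mult.assoc)
  qed
  finally show ?thesis using p' by simp
qed




definition rmap :: "nat \<Rightarrow> nat \<Rightarrow> nat \<Rightarrow> nat" where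
  "rmap a b v = (let u = (if v = b then a else v) in if u > b then u - 1 else u)"

lemma contract_eq: "es ! j = (a, b) \<Longrightarrow> contract (ws, es, m) j =
   (remove_nth b (ws[a := ws ! a + ws ! b]), map (\<lambda>(p,q). (rmap a b p, rmap a b q)) (remove_nth j es), rmap a b \<circ> m)"
proof -
  assume e: "es ! j = (a, b)"
  have f: "fst (es ! j) = a" "snd (es ! j) = b" using e by auto
  show ?thesis unfolding contract_def rmap_def Let_def prod.case f by simp
qed

lemma rmap_lt: "a < L \<Longrightarrow> b < L \<Longrightarrow> a \<noteq> b \<Longrightarrow> v < L \<Longrightarrow> rmap a b v < L - 1"
  unfolding rmap_def Let_def by auto

lemma rmap_insn: "rmap a b (insn b k) = k"
  unfolding rmap_def insn_def Let_def by auto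

lemma insn_rmap: "a \<noteq> b \<Longrightarrow> insn b (rmap a b v) = (if v = b then a else v)"
  unfolding rmap_def insn_def Let_def by auto

lemma rmap_ba: "rmap a b b = rmap a b a"
  unfolding rmap_def by simp

lemma sum_list_remove_nth: "b < length xs \<Longrightarrow> sum_list (remove_nth b xs) + xs ! b = sum_list (xs::nat list)"
proof -
  assume b: "b < length xs"
  have "sum_list xs = sum_list (take b xs @ xs ! b # drop (Suc b) xs)" using id_take_nth_drop[OF b] by simp
  then show ?thesis unfolding remove_nth_def by simp
qed

lemma sum_list_update: "a < length xs \<Longrightarrow> sum_list (xs[a := v]) + xs ! a = sum_list (xs::nat list) + v"
proof -
  assume a: "a < length xs"
  have "sum_list xs = sum_list (take a xs @ xs ! a # drop (Suc a) xs)" using id_take_nth_drop[OF a] by simp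
  moreover have "xs[a := v] = take a xs @ v # drop (Suc a) xs" using upd_conv_take_nth_drop[OF a] .
  ultimately show ?thesis by simp
qed

lemma set_remove_nth: "set (remove_nth j xs) \<subseteq> set xs"
  unfolding remove_nth_def by (auto dest: in_set_takeD in_set_dropD)

lemma in_remove_nth: "i < length xs \<Longrightarrow> j < length xs \<Longrightarrow> i \<noteq> j \<Longrightarrow> xs ! i \<in> set (remove_nth j xs)"
proof -
  assume i: "i < length xs" and j: "j < length xs" and ij: "i \<noteq> j"
  have d: "deln j i < length xs - 1" using deln_lt[OF i j ij] .
  have "remove_nth j xs ! deln j i = xs ! i" using nth_remove_nth[OF j d] insn_deln[OF ij] by simp
  moreover have "deln j i < length (remove_nth j xs)" using d length_remove_nth[OF j] by simp
  ultimately show ?thesis by (metis nth_mem)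
qed

lemma wf_contract:
  assumes wf: "wf_graph g (ws, es, m)" and j: "j < length es" and e: "es ! j = (a, b)" and ab: "a \<noteq> b"
  shows "wf_graph g (contract (ws, es, m) j)"
proof -
  let ?L = "length ws" let ?N = "length es"
  have w: "ws \<noteq> []" "\<forall>e\<in>set es. fst e < ?L \<and> snd e < ?L" "\<forall>i. m i < ?L"
     "\<forall>u<?L. \<forall>v<?L. (u,v) \<in> (edge_rel es)\<^sup>*" "?N + 1 + sum_list ws = ?L + g"
    using wf unfolding wf_graph_def by auto
  have ej: "(a, b) \<in> set es" using e j by (metis nth_mem)
  have aL: "a < ?L" and bL: "b < ?L" using w(2) ej by auto
  define r where "r = rmap a b"
  define wsc where "wsc = remove_nth b (ws[a := ws ! a + ws ! b])"
  define esc where "esc = map (\<lambda>(p,q). (r p, r q)) (remove_nth j es)"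
  have c: "contract (ws, es, m) j = (wsc, esc, r \<circ> m)"
    unfolding wsc_def esc_def r_def by (rule contract_eq[OF e])
  have lw: "length wsc = ?L - 1" unfolding wsc_def using bL by (simp add: length_remove_nth)
  have le: "length esc = ?N - 1" unfolding esc_def using j by (simp add: length_remove_nth)
  have rl: "v < ?L \<Longrightarrow> r v < ?L - 1" for v unfolding r_def using rmap_lt[OF aL bL ab] by blast
  have L2: "?L \<ge> 2" using aL bL ab by linarith
  have c1: "wsc \<noteq> []" using lw L2 by auto
  have c2: "\<forall>e\<in>set esc. fst e < length wsc \<and> snd e < length wsc"
  proof
    fix e assume "e \<in> set esc"
    then obtain x where x: "x \<in> set (remove_nth j es)" "e = (\<lambda>(p,q). (r p, r q)) x"
      unfolding esc_def set_map by blast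
    obtain p q where xpq: "x = (p, q)" by fastforce
    have pq1: "(p, q) \<in> set (remove_nth j es)" using x(1) unfolding xpq .
    have pq2: "e = (r p, r q)" using x(2) unfolding xpq prod.case .
    have pqs: "(p, q) \<in> set es" by (rule subsetD[OF set_remove_nth pq1])
    have "fst (p, q) < ?L \<and> snd (p, q) < ?L" using w(2) pqs by (rule bspec)
    then have "p < ?L" "q < ?L" by simp_all
    then show "fst e < length wsc \<and> snd e < length wsc" unfolding pq2 lw using rl by simp
  qed
  have c3: "\<forall>i. (r \<circ> m) i < length wsc" using rl w(3) lw by simp
  have step: "(q, s) \<in> set es \<Longrightarrow> r q = r s \<or> (r q, r s) \<in> set esc" for q s
  proof -
    assume "(q, s) \<in> set es"
    then obtain i where i: "i < ?N" "es ! i = (q, s)" by (metis in_set_conv_nth)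
    show ?thesis
    proof (cases "i = j")
      case True
      then have "q = a" "s = b" using i e by auto
      then show ?thesis unfolding r_def using rmap_ba by simp
    next
      case False
      then have "(q, s) \<in> set (remove_nth j es)" using in_remove_nth[OF i(1) j False] i(2) by simp
      then show ?thesis unfolding esc_def by force
    qed
  qed
  have path: "(p, q) \<in> (edge_rel es)\<^sup>* \<Longrightarrow> (r p, r q) \<in> (edge_rel esc)\<^sup>*" for p q
  proof (induction rule: rtrancl_induct)
    case base then show ?case by simp
  next
    case (step q s)
    have "r q = r s \<or> (r q, r s) \<in> edge_rel esc"
    proof -
      from step.hyps(2) have "(q, s) \<in> set es \<or> (s, q) \<in> set es" unfolding edge_rel_def by simp
      then show ?thesis
      proof
        assume "(q, s) \<in> set es" then show ?thesis using step(1) unfolding edge_rel_def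
          using \<open>(q, s) \<in> set es\<close> \<open>(q, s) \<in> set es \<Longrightarrow> r q = r s \<or> (r q, r s) \<in> set esc\<close> by auto
      next
        assume "(s, q) \<in> set es" then show ?thesis
          using \<open>(s, q) \<in> set es \<Longrightarrow> r s = r q \<or> (r s, r q) \<in> set esc\<close> unfolding edge_rel_def by auto
      qed
    qed
    then show ?case using step.IH by (metis rtrancl.rtrancl_into_rtrancl)
  qed
  have c4: "\<forall>u<length wsc. \<forall>v<length wsc. (u,v) \<in> (edge_rel esc)\<^sup>*"
  proof (intro allI impI)
    fix u v assume u: "u < length wsc" and v: "v < length wsc"
    have "insn b u < ?L" "insn b v < ?L" using u v lw insn_lt by auto
    then have "(insn b u, insn b v) \<in> (edge_rel es)\<^sup>*" using w(4) by blast
    from path[OF this] show "(u, v) \<in> (edge_rel esc)\<^sup>*" unfolding r_def rmap_insn .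
  qed
  have s1: "sum_list wsc + (ws[a := ws ! a + ws ! b]) ! b = sum_list (ws[a := ws ! a + ws ! b])"
    unfolding wsc_def by (rule sum_list_remove_nth) (use bL in simp)
  have s2: "sum_list (ws[a := ws ! a + ws ! b]) + ws ! a = sum_list ws + (ws ! a + ws ! b)"
    by (rule sum_list_update[OF aL])
  have "(ws[a := ws ! a + ws ! b]) ! b = ws ! b" using ab by simp
  then have sw: "sum_list wsc = sum_list ws" using s1 s2 by linarith
  have c5: "length esc + 1 + sum_list wsc = length wsc + g" using le lw sw w(5) j L2 by linarith
  show ?thesis unfolding c wf_graph_def using c1 c2 c3 c4 c5 by simp
qed




lemma wsc_nth:
  assumes "a < length ws" "b < length ws" "a \<noteq> b" "u < length ws"
  shows "remove_nth b (ws[a := ws ! a + ws ! b]) ! (rmap a b u) = (if u = a \<or> u = b then ws ! a + ws ! b else ws ! u)"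
proof -
  have r: "rmap a b u < length ws - 1" using rmap_lt assms by blast
  have "remove_nth b (ws[a := ws ! a + ws ! b]) ! (rmap a b u) = (ws[a := ws ! a + ws ! b]) ! (if u = b then a else u)"
    using nth_remove_nth[of b "ws[a := ws ! a + ws ! b]" "rmap a b u"] r assms insn_rmap[OF assms(3)] by simp
  then show ?thesis using assms by auto
qed

lemma iso_contract:
  assumes wf: "wf_graph g (ws, es, m)" and iso: "graph_iso (ws, es, m) (ws', es', m') \<pi> \<sigma>"
    and j: "j < length es" and e: "es ! j = (a, b)" and ab: "a \<noteq> b" and e': "es' ! (\<sigma> j) = (a', b')"
  shows "a' \<noteq> b' \<and> (\<exists>\<pi>'. graph_iso (contract (ws, es, m) j) (contract (ws', es', m') (\<sigma> j)) \<pi>' (sig' \<sigma> (length es) j))"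
proof -
  let ?L = "length ws" let ?N = "length es"
  have w: "\<forall>e\<in>set es. fst e < ?L \<and> snd e < ?L" "\<forall>i. m i < ?L"
    using wf unfolding wf_graph_def by auto
  have I: "length ws' = ?L" "length es' = ?N" "\<pi> permutes {..<?L}" "\<sigma> permutes {..<?N}"
     "\<forall>v<?L. ws' ! (\<pi> v) = ws ! v" "\<forall>i. m' i = \<pi> (m i)"
     "\<forall>k<?N. es' ! (\<sigma> k) = (\<pi> (fst (es!k)), \<pi> (snd (es!k))) \<or> es' ! (\<sigma> k) = (\<pi> (snd (es!k)), \<pi> (fst (es!k)))"
    using iso unfolding graph_iso_def by auto
  have ej: "(a, b) \<in> set es" using e j by (metis nth_mem)
  have aL: "a < ?L" and bL: "b < ?L" using w(1) ej by auto
  have piL: "v < ?L \<Longrightarrow> \<pi> v < ?L" for v using perm_lt[OF I(3)] .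
  have pinj: "u < ?L \<Longrightarrow> v < ?L \<Longrightarrow> \<pi> u = \<pi> v \<Longrightarrow> u = v" for u v
    using permutes_inj[OF I(3)] by (meson injD)
  have ab': "(a', b') = (\<pi> a, \<pi> b) \<or> (a', b') = (\<pi> b, \<pi> a)" using I(7) j e e' by auto
  have pab: "\<pi> a \<noteq> \<pi> b" using pinj aL bL ab by blast
  have ab'ne: "a' \<noteq> b'" using ab' pab by auto
  have a'L: "a' < ?L" and b'L: "b' < ?L" using ab' piL aL bL by auto
  have sab: "\<pi> u = a' \<or> \<pi> u = b' \<longleftrightarrow> u = a \<or> u = b" if "u < ?L" for u
    using ab' pinj[OF that aL] pinj[OF that bL] by auto
  define \<pi>' where "\<pi>' = (\<lambda>k. if k < ?L - 1 then rmap a' b' (\<pi> (insn b k)) else k)"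
  have K: "\<pi>' (rmap a b u) = rmap a' b' (\<pi> u)" if u: "u < ?L" for u
  proof -
    have "rmap a b u < ?L - 1" using rmap_lt[OF aL bL ab u] .
    then have "\<pi>' (rmap a b u) = rmap a' b' (\<pi> (if u = b then a else u))"
      unfolding \<pi>'_def using insn_rmap[OF ab] by simp
    also have "\<dots> = rmap a' b' (\<pi> u)"
    proof (cases "u = b")
      case True
      have "rmap a' b' (\<pi> a) = rmap a' b' (\<pi> b)" using ab' rmap_ba[of a' b'] by auto
      then show ?thesis using True by simp
    qed simp
    finally show ?thesis .
  qed
  have pi'_lt: "k < ?L - 1 \<Longrightarrow> \<pi>' k < ?L - 1" for k
    unfolding \<pi>'_def using rmap_lt[OF a'L b'L ab'ne] piL insn_lt by simp
  have pi'_img: "\<pi>' ` {..<?L - 1} = {..<?L - 1}"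
  proof
    show "\<pi>' ` {..<?L - 1} \<subseteq> {..<?L - 1}" using pi'_lt by auto
    show "{..<?L - 1} \<subseteq> \<pi>' ` {..<?L - 1}"
    proof
      fix t assume t: "t \<in> {..<?L - 1}"
      have "insn b' t < ?L" using t insn_lt by simp
      then have "insn b' t \<in> \<pi> ` {..<?L}" using permutes_image[OF I(3)] by simp
      then obtain u where u: "u < ?L" "\<pi> u = insn b' t" by auto
      have "\<pi>' (rmap a b u) = t" using K[OF u(1)] u(2) rmap_insn by simp
      moreover have "rmap a b u \<in> {..<?L - 1}" using rmap_lt[OF aL bL ab u(1)] by simp
      ultimately show "t \<in> \<pi>' ` {..<?L - 1}" by (metis image_eqI)
    qed
  qed
  have pi'_perm: "\<pi>' permutes {..<?L - 1}"
  proof (rule bij_imp_permutes)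
    have "card (\<pi>' ` {..<?L - 1}) = card {..<?L - 1}" unfolding pi'_img ..
    then have "inj_on \<pi>' {..<?L - 1}" by (rule eq_card_imp_inj_on[OF finite_lessThan])
    then show "bij_betw \<pi>' {..<?L - 1} {..<?L - 1}" using pi'_img by (simp add: bij_betw_def)
    show "x \<notin> {..<?L - 1} \<Longrightarrow> \<pi>' x = x" for x unfolding \<pi>'_def by simp
  qed
  have sg: "sig' \<sigma> ?N j permutes {..<?N - 1}" using sig'_sign[OF I(4) j] by blast
  have sj: "\<sigma> j < ?N" using perm_lt[OF I(4) j] .
  have c1: "contract (ws, es, m) j = (remove_nth b (ws[a := ws ! a + ws ! b]),
      map (\<lambda>(p,q). (rmap a b p, rmap a b q)) (remove_nth j es), rmap a b \<circ> m)"
    by (rule contract_eq[OF e])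
  have c2: "contract (ws', es', m') (\<sigma> j) = (remove_nth b' (ws'[a' := ws' ! a' + ws' ! b']),
      map (\<lambda>(p,q). (rmap a' b' p, rmap a' b' q)) (remove_nth (\<sigma> j) es'), rmap a' b' \<circ> m')"
    by (rule contract_eq[OF e'])
  have lw: "length (remove_nth b (ws[a := ws ! a + ws ! b])) = ?L - 1"
    using bL by (simp add: length_remove_nth)
  have lw': "length (remove_nth b' (ws'[a' := ws' ! a' + ws' ! b'])) = ?L - 1"
    using b'L I(1) by (simp add: length_remove_nth)
  have le: "length (remove_nth j es) = ?N - 1" using j by (simp add: length_remove_nth)
  have le': "length (remove_nth (\<sigma> j) es') = ?N - 1" using sj I(2) by (simp add: length_remove_nth)
  have wsum: "ws' ! a' + ws' ! b' = ws ! a + ws ! b" using ab' I(5) aL bL by auto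
  have W: "remove_nth b' (ws'[a' := ws' ! a' + ws' ! b']) ! (\<pi>' v) = remove_nth b (ws[a := ws ! a + ws ! b]) ! v"
    if v: "v < ?L - 1" for v
  proof -
    define u where "u = insn b v"
    have u: "u < ?L" unfolding u_def using insn_lt v by simp
    have ru: "rmap a b u = v" unfolding u_def by (rule rmap_insn)
    have "remove_nth b' (ws'[a' := ws' ! a' + ws' ! b']) ! (\<pi>' v)
        = remove_nth b' (ws'[a' := ws' ! a' + ws' ! b']) ! (rmap a' b' (\<pi> u))"
      using K[OF u] ru by simp
    also have "\<dots> = (if \<pi> u = a' \<or> \<pi> u = b' then ws' ! a' + ws' ! b' else ws' ! (\<pi> u))"
      by (rule wsc_nth) (use a'L b'L ab'ne piL u I(1) in auto)
    also have "\<dots> = (if u = a \<or> u = b then ws ! a + ws ! b else ws ! u)"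
      using sab[OF u] wsum I(5) u by simp
    also have "\<dots> = remove_nth b (ws[a := ws ! a + ws ! b]) ! (rmap a b u)"
      by (rule wsc_nth[symmetric]) (use aL bL ab u in auto)
    finally show ?thesis using ru by simp
  qed
  have E: "(\<lambda>(p,q). (rmap a' b' p, rmap a' b' q)) (remove_nth (\<sigma> j) es' ! (sig' \<sigma> ?N j k)) =
        (\<pi>' (fst ((\<lambda>(p,q). (rmap a b p, rmap a b q)) (remove_nth j es ! k))),
         \<pi>' (snd ((\<lambda>(p,q). (rmap a b p, rmap a b q)) (remove_nth j es ! k)))) \<or>
      (\<lambda>(p,q). (rmap a' b' p, rmap a' b' q)) (remove_nth (\<sigma> j) es' ! (sig' \<sigma> ?N j k)) =
        (\<pi>' (snd ((\<lambda>(p,q). (rmap a b p, rmap a b q)) (remove_nth j es ! k))),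
         \<pi>' (fst ((\<lambda>(p,q). (rmap a b p, rmap a b q)) (remove_nth j es ! k))))"
    if k: "k < ?N - 1" for k
  proof -
    define i where "i = insn j k"
    have i: "i < ?N" unfolding i_def using insn_lt k by simp
    obtain p q where pq: "es ! i = (p, q)" by fastforce
    have "(p, q) \<in> set es" using pq i by (metis nth_mem)
    then have pL: "p < ?L" and qL: "q < ?L" using w(1) by auto
    have r1: "remove_nth j es ! k = (p, q)" using nth_remove_nth[OF j] k pq unfolding i_def by simp
    have sk: "sig' \<sigma> ?N j k < ?N - 1" using sig'_lt[OF I(4) j k] .
    have r2: "remove_nth (\<sigma> j) es' ! (sig' \<sigma> ?N j k) = es' ! (\<sigma> i)"
      using nth_remove_nth[of "\<sigma> j" es' "sig' \<sigma> ?N j k"] sj I(2) sk sig'_insn[OF I(4) j k]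
      unfolding i_def by simp
    have "es' ! (\<sigma> i) = (\<pi> p, \<pi> q) \<or> es' ! (\<sigma> i) = (\<pi> q, \<pi> p)" using I(7) i pq by force
    then show ?thesis unfolding r1 r2 using K[OF pL] K[OF qL] by auto
  qed
  have G: "graph_iso (contract (ws, es, m) j) (contract (ws', es', m') (\<sigma> j)) \<pi>' (sig' \<sigma> ?N j)"
    unfolding c1 c2 graph_iso_def prod.case
  proof (intro conjI allI impI)
    show "length (remove_nth b' (ws'[a' := ws' ! a' + ws' ! b'])) = length (remove_nth b (ws[a := ws ! a + ws ! b]))"
      using lw lw' by simp
    show "length (map (\<lambda>(p,q). (rmap a' b' p, rmap a' b' q)) (remove_nth (\<sigma> j) es')) =
          length (map (\<lambda>(p,q). (rmap a b p, rmap a b q)) (remove_nth j es))" using le le' by simp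
    show "\<pi>' permutes {..<length (remove_nth b (ws[a := ws ! a + ws ! b]))}" using pi'_perm lw by simp
    show "sig' \<sigma> ?N j permutes {..<length (map (\<lambda>(p,q). (rmap a b p, rmap a b q)) (remove_nth j es))}"
      using sg le by simp
    show "remove_nth b' (ws'[a' := ws' ! a' + ws' ! b']) ! (\<pi>' v) = remove_nth b (ws[a := ws ! a + ws ! b]) ! v"
      if "v < length (remove_nth b (ws[a := ws ! a + ws ! b]))" for v using W that lw by simp
    show "(rmap a' b' \<circ> m') i = \<pi>' ((rmap a b \<circ> m) i)" for i
      using K[of "m i"] w(2) I(6) by simp
    fix k assume k: "k < length (map (\<lambda>(p,q). (rmap a b p, rmap a b q)) (remove_nth j es))"
    then have k': "k < ?N - 1" using le by simp
    have sk: "sig' \<sigma> ?N j k < ?N - 1" using sig'_lt[OF I(4) j k'] .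
    show "map (\<lambda>(p,q). (rmap a' b' p, rmap a' b' q)) (remove_nth (\<sigma> j) es') ! (sig' \<sigma> ?N j k) =
         (\<pi>' (fst (map (\<lambda>(p,q). (rmap a b p, rmap a b q)) (remove_nth j es) ! k)),
          \<pi>' (snd (map (\<lambda>(p,q). (rmap a b p, rmap a b q)) (remove_nth j es) ! k))) \<or>
         map (\<lambda>(p,q). (rmap a' b' p, rmap a' b' q)) (remove_nth (\<sigma> j) es') ! (sig' \<sigma> ?N j k) =
         (\<pi>' (snd (map (\<lambda>(p,q). (rmap a b p, rmap a b q)) (remove_nth j es) ! k)),
          \<pi>' (fst (map (\<lambda>(p,q). (rmap a b p, rmap a b q)) (remove_nth j es) ! k)))"
      using E[OF k'] sk le le' k' by simp
  qed
  show ?thesis using G ab'ne by blast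
qed




lemma neg1_pow: "((-1::rat) ^ j) * (-1) ^ (j + k) = (-1) ^ k"
proof -
  have "((-1::rat) ^ j) * (-1) ^ (j + k) = ((-1) ^ j * (-1) ^ j) * (-1) ^ k"
    by (simp add: power_add mult.assoc)
  also have "\<dots> = (-1) ^ k" by (simp add: left_minus_one_mult_self)
  finally show ?thesis .
qed

lemma dgen_expand: "dgen (ws, es, m) z = (\<Sum>j<length es. if fst (es ! j) \<noteq> snd (es ! j)
    then (-1) ^ j * delta (contract (ws, es, m) j) z else 0)"
  unfolding dgen_def deg_def delta_def by (intro sum.cong) auto

lemma dgen_rel:
  assumes wf: "wf_graph g x" and iso: "graph_iso x y \<pi> \<sigma>"
  shows "(\<lambda>z. dgen x z - of_int (sign \<sigma>) * dgen y z) \<in> Rel g"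
proof -
  obtain ws es m where x: "x = (ws, es, m)" by (cases x) auto
  obtain ws' es' m' where y: "y = (ws', es', m')" by (cases y) auto
  let ?N = "length es"
  have I: "length es' = ?N" "\<sigma> permutes {..<?N}"
     "\<forall>k<?N. es' ! (\<sigma> k) = (\<pi> (fst (es!k)), \<pi> (snd (es!k))) \<or> es' ! (\<sigma> k) = (\<pi> (snd (es!k)), \<pi> (fst (es!k)))"
    using iso unfolding x y graph_iso_def by auto
  define s where "s = (of_int (sign \<sigma>) :: rat)"
  define T where "T = (\<lambda>j z. if fst (es ! j) \<noteq> snd (es ! j) then (-1) ^ j * delta (contract x j) z else (0::rat))"
  define T' where "T' = (\<lambda>j z. if fst (es' ! j) \<noteq> snd (es' ! j) then (-1) ^ j * delta (contract y j) z else (0::rat))"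
  have dx: "dgen x z = (\<Sum>j<?N. T j z)" for z unfolding T_def x by (rule dgen_expand)
  have dy: "dgen y z = (\<Sum>j<?N. T' (\<sigma> j) z)" for z
  proof -
    have "dgen y z = (\<Sum>j<?N. T' j z)" unfolding T'_def y dgen_expand I(1) ..
    also have "\<dots> = (\<Sum>j<?N. T' (\<sigma> j) z)"
      by (rule sum.reindex_bij_betw[symmetric]) (rule permutes_imp_bij[OF I(2)])
    finally show ?thesis .
  qed
  have eq: "(\<lambda>z. dgen x z - of_int (sign \<sigma>) * dgen y z) = (\<lambda>z. \<Sum>j<?N. T j z - s * T' (\<sigma> j) z)"
    unfolding dx dy s_def by (simp add: sum_subtractf sum_distrib_left)
  have tj: "(\<lambda>z. T j z - s * T' (\<sigma> j) z) \<in> Rel g" if j: "j < ?N" for j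
  proof -
    obtain a b where e: "es ! j = (a, b)" by fastforce
    obtain a' b' where e': "es' ! (\<sigma> j) = (a', b')" by fastforce
    have ab': "(a', b') = (\<pi> a, \<pi> b) \<or> (a', b') = (\<pi> b, \<pi> a)" using I(3) j e e' by auto
    show ?thesis
    proof (cases "a = b")
      case True
      then have "a' = b'" using ab' by auto
      then have "(\<lambda>z. T j z - s * T' (\<sigma> j) z) = (\<lambda>z. 0)" unfolding T_def T'_def using e e' True by simp
      then show ?thesis using Rel_zero by simp
    next
      case False
      have wfx: "wf_graph g (ws, es, m)" using wf x by simp
      have iso': "graph_iso (ws, es, m) (ws', es', m') \<pi> \<sigma>" using iso x y by simp
      obtain \<pi>' where ic: "a' \<noteq> b'" "graph_iso (contract x j) (contract y (\<sigma> j)) \<pi>' (sig' \<sigma> ?N j)"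
        using iso_contract[OF wfx iso' j e False e'] x y by blast
      have wc: "wf_graph g (contract x j)" using wf_contract[OF wfx j e False] x by simp
      have sg: "sign (sig' \<sigma> ?N j) = sign \<sigma> * (-1) ^ (j + \<sigma> j)" using sig'_sign[OF I(2) j] by blast
      define v where "v = (\<lambda>z. delta (contract x j) z - of_int (sign (sig' \<sigma> ?N j)) * delta (contract y (\<sigma> j)) z)"
      have v: "v \<in> rel_vecs g" unfolding v_def rel_vecs_def using wc ic(2) by blast
      have sg': "(of_int (sign (sig' \<sigma> ?N j)) :: rat) = s * (-1) ^ (j + \<sigma> j)"
        unfolding sg s_def by simp
      have "(\<lambda>z. T j z - s * T' (\<sigma> j) z) = (\<lambda>z. (-1) ^ j * v z)"
      proof
        fix z
        have "T j z - s * T' (\<sigma> j) z = (-1) ^ j * delta (contract x j) z - s * ((-1) ^ (\<sigma> j) * delta (contract y (\<sigma> j)) z)"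
          unfolding T_def T'_def using e e' False ic(1) by simp
        also have "\<dots> = (-1) ^ j * delta (contract x j) z - ((-1) ^ j * (s * (-1) ^ (j + \<sigma> j))) * delta (contract y (\<sigma> j)) z"
          using neg1_pow[of j "\<sigma> j"] by (simp add: algebra_simps)
        also have "\<dots> = (-1) ^ j * v z" unfolding v_def sg' by (simp add: algebra_simps)
        finally show "T j z - s * T' (\<sigma> j) z = (-1) ^ j * v z" .
      qed
      moreover have "(\<lambda>z. (-1) ^ j * v z) \<in> Rel g"
        unfolding Rel_def by (rule lin_span_smult[OF lin_span_gen[OF v]])
      ultimately show ?thesis by simp
    qed
  qed
  show ?thesis unfolding eq unfolding Rel_def
    by (rule lin_span_sum) (use tj in \<open>auto simp: Rel_def\<close>)
qed

lemma dfree_relvec: assumes "v \<in> rel_vecs g" shows "dfree v \<in> Rel g"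
proof -
  obtain x y \<pi> \<sigma> where v: "v = (\<lambda>z. delta x z - of_int (sign \<sigma>) * delta y z)"
     "wf_graph g x" "graph_iso x y \<pi> \<sigma>" using assms unfolding rel_vecs_def by blast
  have "dfree v = (\<lambda>z'. dgen x z' - of_int (sign \<sigma>) * dgen y z')"
  proof
    fix z'
    have "dfree v z' = (\<Sum>z\<in>{x, y}. v z * dgen z z')"
      by (rule dfree_eq) (auto simp: v(1) delta_def)
    also have "\<dots> = dgen x z' - of_int (sign \<sigma>) * dgen y z'"
      by (cases "x = y") (auto simp: v(1) delta_def algebra_simps)
    finally show "dfree v z' = dgen x z' - of_int (sign \<sigma>) * dgen y z'" .
  qed
  then show ?thesis using dgen_rel[OF v(2,3)] by simp
qed

lemma dfree_Rel: "r \<in> Rel g \<Longrightarrow> dfree r \<in> Rel g"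
  unfolding Rel_def
  by (rule dfree_lin_span) (use fin_rel dfree_relvec in \<open>auto simp: Rel_def\<close>)




definition relabel :: "('n \<Rightarrow> 'n) \<Rightarrow> 'n ograph \<Rightarrow> 'n ograph" where
  "relabel \<rho> x = (case x of (ws, es, m) \<Rightarrow> (ws, es, m \<circ> \<rho>))"

lemma relabel_simp: "relabel \<rho> (ws, es, m) = (ws, es, m \<circ> \<rho>)"
  by (simp add: relabel_def)

lemma relabel_inv1: "bij \<rho> \<Longrightarrow> relabel \<rho> (relabel (inv \<rho>) z) = z"
  by (cases z) (simp add: relabel_def o_def inv_f_f[OF bij_is_inj])

lemma relabel_inv2: "bij \<rho> \<Longrightarrow> relabel (inv \<rho>) (relabel \<rho> z) = z"
  by (cases z) (simp add: relabel_def o_def surj_f_inv_f[OF bij_is_surj])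

lemma wf_relabel: "wf_graph g x \<Longrightarrow> wf_graph g (relabel \<rho> x)"
  by (cases x) (auto simp: relabel_def wf_graph_def)

lemma iso_relabel: "graph_iso x y \<pi> \<sigma> \<Longrightarrow> graph_iso (relabel \<rho> x) (relabel \<rho> y) \<pi> \<sigma>"
  by (cases x; cases y) (auto simp: relabel_def graph_iso_def)

lemma deg_relabel: "deg (relabel \<rho> x) = deg x"
  by (cases x) (auto simp: relabel_def deg_def)

lemma contract_relabel: "contract (relabel \<rho> x) j = relabel \<rho> (contract x j)"
  by (cases x) (auto simp: relabel_def contract_def Let_def o_def)

lemma dgen_relabel:
  assumes "bij \<rho>" shows "dgen (relabel \<rho> x) y = dgen x (relabel (inv \<rho>) y)"
proof -
  have e: "(relabel \<rho> c = y) = (c = relabel (inv \<rho>) y)" for c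
    using relabel_inv1[OF assms] relabel_inv2[OF assms] by metis
  have es: "fst (snd (relabel \<rho> x)) = fst (snd x)" by (cases x) (simp add: relabel_def)
  show ?thesis unfolding dgen_def deg_relabel contract_relabel e es ..
qed

lemma stable_relabel:
  assumes "bij \<rho>" shows "stable_graph g (A \<circ> \<rho>) (relabel \<rho> x) = stable_graph g A x"
proof -
  obtain ws es m where x: "x = (ws, es, m)" by (cases x) auto
  have s: "(\<Sum>i\<in>{i. m (\<rho> i) = v}. A (\<rho> i)) = sum A {i. m i = v}" for v
    using assms
    by (intro sum.reindex_bij_witness[of _ "inv \<rho>" \<rho>])
       (auto simp: bij_inv_eq_iff bij_is_inj bij_is_surj surj_f_inv_f)
  show ?thesis
    unfolding x relabel_simp stable_graph_def
    using wf_relabel[of g "(ws,es,m)" \<rho>] wf_relabel[of g "(ws,es,m \<circ> \<rho>)" "inv \<rho>"]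
      relabel_inv2[OF assms, of "(ws,es,m)"]
    by (auto simp: relabel_simp s)
qed

definition P :: "('n \<Rightarrow> 'n) \<Rightarrow> ('n ograph \<Rightarrow> rat) \<Rightarrow> 'n ograph \<Rightarrow> rat" where
  "P \<rho> f = (\<lambda>z. f (relabel \<rho> z))"

lemma P_delta: "bij \<rho> \<Longrightarrow> P \<rho> (delta x) = delta (relabel (inv \<rho>) x)"
  unfolding P_def delta_def using relabel_inv1 relabel_inv2 by metis

lemma P_rel_vecs: assumes "bij \<rho>" "v \<in> rel_vecs g" shows "P \<rho> v \<in> rel_vecs g"
proof -
  obtain x y \<pi> \<sigma> where v: "v = (\<lambda>z. delta x z - of_int (sign \<sigma>) * delta y z)"
     "wf_graph g x" "graph_iso x y \<pi> \<sigma>" using assms(2) unfolding rel_vecs_def by blast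
  have "P \<rho> v = (\<lambda>z. delta (relabel (inv \<rho>) x) z - of_int (sign \<sigma>) * delta (relabel (inv \<rho>) y) z)"
    using P_delta[OF assms(1)] unfolding v(1) by (auto simp: P_def fun_eq_iff)
  then show ?thesis unfolding rel_vecs_def using wf_relabel[OF v(2)] iso_relabel[OF v(3)] by blast
qed

lemma P_Rel: assumes "bij \<rho>" "r \<in> Rel g" shows "P \<rho> r \<in> Rel g"
proof -
  have "P \<rho> r \<in> lin_span ((\<lambda>v z. v (relabel \<rho> z)) ` rel_vecs g)"
    using lin_span_comp[of r "rel_vecs g" "relabel \<rho>"] assms(2) unfolding Rel_def P_def by blast
  moreover have "(\<lambda>v z. v (relabel \<rho> z)) ` rel_vecs g \<subseteq> rel_vecs g"
    using P_rel_vecs[OF assms(1)] unfolding P_def by blast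
  ultimately show ?thesis unfolding Rel_def using lin_span_mono by blast
qed

lemma fin_P: assumes "bij \<rho>" "fin f" shows "fin (P \<rho> f)"
proof -
  have "{z. P \<rho> f z \<noteq> 0} \<subseteq> relabel (inv \<rho>) ` {z. f z \<noteq> 0}"
  proof
    fix z assume "z \<in> {z. P \<rho> f z \<noteq> 0}"
    then have "relabel \<rho> z \<in> {z. f z \<noteq> 0}" by (simp add: P_def)
    moreover have "z = relabel (inv \<rho>) (relabel \<rho> z)" using relabel_inv2[OF assms(1)] by simp
    ultimately show "z \<in> relabel (inv \<rho>) ` {z. f z \<noteq> 0}" by blast
  qed
  then show ?thesis using assms(2) unfolding fin_def by (auto elim: finite_subset)
qed

lemma dfree_P: assumes "bij \<rho>" shows "dfree (P \<rho> f) = P \<rho> (dfree f)"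
proof
  fix y
  have bi: "bij (inv \<rho>)" using assms by (simp add: bij_imp_bij_inv)
  have ii: "inv (inv \<rho>) = \<rho>" using assms by (simp add: inv_inv_eq)
  have "dfree (P \<rho> f) y = (\<Sum>z\<in>{z. f (relabel \<rho> z) \<noteq> 0}. f (relabel \<rho> z) * dgen z y)"
    unfolding dfree_def P_def ..
  also have "\<dots> = (\<Sum>w\<in>{w. f w \<noteq> 0}. f w * dgen (relabel (inv \<rho>) w) y)"
    by (rule sum.reindex_bij_witness[of _ "relabel (inv \<rho>)" "relabel \<rho>"])
       (auto simp: relabel_inv1[OF assms] relabel_inv2[OF assms])
  also have "\<dots> = (\<Sum>w\<in>{w. f w \<noteq> 0}. f w * dgen w (relabel \<rho> y))"
    using dgen_relabel[OF bi] ii by simp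
  also have "\<dots> = P \<rho> (dfree f) y" unfolding P_def dfree_def ..
  finally show "dfree (P \<rho> f) y = P \<rho> (dfree f) y" .
qed

lemma P_add: "P \<rho> (\<lambda>z. f z + h z) = (\<lambda>z. P \<rho> f z + P \<rho> h z)" by (simp add: P_def)
lemma P_smult: "P \<rho> (\<lambda>z. c * f z) = (\<lambda>z. c * P \<rho> f z)" by (simp add: P_def)
lemma P_diff: "P \<rho> (\<lambda>z. f z - h z) = (\<lambda>z. P \<rho> f z - P \<rho> h z)" by (simp add: P_def)
lemma P_P: "bij \<rho> \<Longrightarrow> P (inv \<rho>) (P \<rho> f) = f"
  by (simp add: P_def relabel_inv1 fun_eq_iff)

lemma P_coset: assumes "bij \<rho>"
  shows "coset (Rel g) (P \<rho> (rep (coset (Rel g) f))) = coset (Rel g) (P \<rho> f)"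
  apply (rule coset_eq)
  using P_Rel[OF assms rep_coset[of g f]] by (simp add: P_def)

lemma GC_elem: "X \<in> GC g A k \<Longrightarrow> \<exists>f. X = coset (Rel g) f \<and> f \<in> lin_span (delta ` {x. stable_graph g A x \<and> deg x = k})"
  unfolding GC_def by blast

lemma fin_span_delta: "f \<in> lin_span (delta ` S) \<Longrightarrow> fin f"
  by (rule fin_lin_span[of "delta ` S"]) (auto simp: fin_delta)

lemma P_span: assumes "bij \<rho>" "f \<in> lin_span (delta ` {x. stable_graph g A x \<and> deg x = k})"
  shows "P \<rho> f \<in> lin_span (delta ` {x. stable_graph g (A \<circ> inv \<rho>) x \<and> deg x = k})"
proof -
  have bi: "bij (inv \<rho>)" using assms by (simp add: bij_imp_bij_inv)
  have h1: "P \<rho> f \<in> lin_span ((\<lambda>v z. v (relabel \<rho> z)) ` delta ` {x. stable_graph g A x \<and> deg x = k})"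
    using lin_span_comp assms(2) unfolding P_def by blast
  have h2: "(\<lambda>v z. v (relabel \<rho> z)) ` delta ` {x. stable_graph g A x \<and> deg x = k}
     \<subseteq> delta ` {x. stable_graph g (A \<circ> inv \<rho>) x \<and> deg x = k}"
  proof
    fix u assume "u \<in> (\<lambda>v z. v (relabel \<rho> z)) ` delta ` {x. stable_graph g A x \<and> deg x = k}"
    then obtain x where x: "stable_graph g A x" "deg x = k" "u = P \<rho> (delta x)" unfolding P_def by blast
    have "u = delta (relabel (inv \<rho>) x)" using x(3) P_delta[OF assms(1)] by simp
    moreover have "stable_graph g (A \<circ> inv \<rho>) (relabel (inv \<rho>) x)" using stable_relabel[OF bi] x(1) by simp
    ultimately show "u \<in> delta ` {x. stable_graph g (A \<circ> inv \<rho>) x \<and> deg x = k}"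
      using x(2) deg_relabel by blast
  qed
  show ?thesis by (rule subsetD[OF lin_span_mono[OF h2] h1])
qed

lemma GC_iso_perm:
  assumes "\<sigma> permutes (UNIV::'n::finite set)"
  shows "GC_iso g A (A \<circ> \<sigma>)"
proof -
  have bs: "bij \<sigma>" using assms permutes_bij by blast
  define \<rho> where "\<rho> = inv \<sigma>"
  have br: "bij \<rho>" unfolding \<rho>_def using bs by (simp add: bij_imp_bij_inv)
  have ir: "inv \<rho> = \<sigma>" unfolding \<rho>_def using bs by (simp add: inv_inv_eq)
  define \<Phi> where "\<Phi> = (\<lambda>(k::nat) X. coset (Rel g) (P \<rho> (rep X)))"
  have Phi_coset: "\<Phi> k (coset (Rel g) f) = coset (Rel g) (P \<rho> f)" for k f
    unfolding \<Phi>_def by (rule P_coset[OF br])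
  have repX: "(\<lambda>z. rep (coset (Rel g) f) z - f z) \<in> Rel g" for f by (rule rep_coset)
  show ?thesis unfolding GC_iso_def
  proof (intro exI allI conjI ballI)
    fix k
    show "bij_betw (\<Phi> k) (GC g A k) (GC g (A \<circ> \<sigma>) k)"
    proof (rule bij_betw_imageI)
      show "inj_on (\<Phi> k) (GC g A k)"
      proof
        fix X Y assume X: "X \<in> GC g A k" and Y: "Y \<in> GC g A k" and e: "\<Phi> k X = \<Phi> k Y"
        obtain f where f: "X = coset (Rel g) f" using GC_elem[OF X] by blast
        obtain h where h: "Y = coset (Rel g) h" using GC_elem[OF Y] by blast
        have "(\<lambda>z. P \<rho> f z - P \<rho> h z) \<in> Rel g" using e unfolding f h Phi_coset coset_eq_iff .
        then have "P (inv \<rho>) (\<lambda>z. P \<rho> f z - P \<rho> h z) \<in> Rel g" using P_Rel[OF bij_imp_bij_inv[OF br]] by blast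
        then have "(\<lambda>z. f z - h z) \<in> Rel g" unfolding P_diff P_P[OF br] .
        then show "X = Y" unfolding f h by (rule coset_eq)
      qed
      show "\<Phi> k ` GC g A k = GC g (A \<circ> \<sigma>) k"
      proof (intro set_eqI iffI)
        fix Y assume "Y \<in> \<Phi> k ` GC g A k"
        then obtain X where X: "X \<in> GC g A k" "Y = \<Phi> k X" by blast
        obtain f where f: "X = coset (Rel g) f" "f \<in> lin_span (delta ` {x. stable_graph g A x \<and> deg x = k})"
          using GC_elem[OF X(1)] by blast
        have "P \<rho> f \<in> lin_span (delta ` {x. stable_graph g (A \<circ> \<sigma>) x \<and> deg x = k})"
          using P_span[OF br f(2)] ir by simp
        then show "Y \<in> GC g (A \<circ> \<sigma>) k" unfolding X(2) f(1) Phi_coset GC_def by blast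
      next
        fix Y assume Y: "Y \<in> GC g (A \<circ> \<sigma>) k"
        obtain f where f: "Y = coset (Rel g) f" "f \<in> lin_span (delta ` {x. stable_graph g (A \<circ> \<sigma>) x \<and> deg x = k})"
          using GC_elem[OF Y] by blast
        have "P \<sigma> f \<in> lin_span (delta ` {x. stable_graph g (A \<circ> \<sigma> \<circ> inv \<sigma>) x \<and> deg x = k})"
          using P_span[OF bs f(2)] by simp
        moreover have "A \<circ> \<sigma> \<circ> inv \<sigma> = A" using bs by (auto simp: fun_eq_iff bij_def surj_f_inv_f)
        ultimately have "P \<sigma> f \<in> lin_span (delta ` {x. stable_graph g A x \<and> deg x = k})" by simp
        then have "coset (Rel g) (P \<sigma> f) \<in> GC g A k" unfolding GC_def by blast
        moreover have "\<Phi> k (coset (Rel g) (P \<sigma> f)) = Y"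
          unfolding Phi_coset f(1) using P_P[OF bs] \<rho>_def by simp
        ultimately show "Y \<in> \<Phi> k ` GC g A k" by (metis image_eqI)
      qed
    qed
  next
    fix k X Y assume X: "X \<in> GC g A k" and Y: "Y \<in> GC g A k"
    have a: "(\<lambda>z. rep (\<Phi> k X) z - P \<rho> (rep X) z) \<in> Rel g" unfolding \<Phi>_def by (rule repX)
    have b: "(\<lambda>z. rep (\<Phi> k Y) z - P \<rho> (rep Y) z) \<in> Rel g" unfolding \<Phi>_def by (rule repX)
    have "(\<lambda>z. (-1) * ((rep (\<Phi> k X) z - P \<rho> (rep X) z) + (rep (\<Phi> k Y) z - P \<rho> (rep Y) z))) \<in> Rel g"
      by (rule Rel_smult[OF Rel_add[OF a b]])
    then have "(\<lambda>z. P \<rho> (\<lambda>z. rep X z + rep Y z) z - (rep (\<Phi> k X) z + rep (\<Phi> k Y) z)) \<in> Rel g"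
      by (simp add: P_def algebra_simps)
    then show "\<Phi> k (addQ g X Y) = addQ g (\<Phi> k X) (\<Phi> k Y)"
      unfolding addQ_def Phi_coset by (rule coset_eq)
  next
    fix k c X assume X: "X \<in> GC g A k"
    have a: "(\<lambda>z. rep (\<Phi> k X) z - P \<rho> (rep X) z) \<in> Rel g" unfolding \<Phi>_def by (rule repX)
    have "(\<lambda>z. (-c) * (rep (\<Phi> k X) z - P \<rho> (rep X) z)) \<in> Rel g"
      by (rule Rel_smult[OF a])
    then have "(\<lambda>z. P \<rho> (\<lambda>z. c * rep X z) z - c * rep (\<Phi> k X) z) \<in> Rel g"
      by (simp add: P_def algebra_simps)
    then show "\<Phi> k (smulQ g c X) = smulQ g c (\<Phi> k X)"
      unfolding smulQ_def Phi_coset by (rule coset_eq)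
  next
    fix k X assume X: "X \<in> GC g A (Suc k)"
    obtain f where f: "X = coset (Rel g) f" "fin f"
      using GC_elem[OF X] fin_span_delta by blast
    have fr: "fin (rep X)" unfolding f(1) by (rule fin_coset_rep[OF f(2)])
    define r where "r = (\<lambda>z. rep (coset (Rel g) (P \<rho> (rep X))) z - P \<rho> (rep X) z)"
    have r: "r \<in> Rel g" unfolding r_def by (rule repX)
    have e: "rep (coset (Rel g) (P \<rho> (rep X))) = (\<lambda>z. P \<rho> (rep X) z + r z)"
      unfolding r_def by simp
    have "dfree (rep (coset (Rel g) (P \<rho> (rep X)))) = (\<lambda>y. dfree (P \<rho> (rep X)) y + dfree r y)"
      unfolding e by (rule dfree_add[OF fin_P[OF br fr] fin_Rel[OF r]])
    then have "dfree (rep (coset (Rel g) (P \<rho> (rep X)))) = (\<lambda>y. P \<rho> (dfree (rep X)) y + dfree r y)"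
      using dfree_P[OF br] by simp
    moreover have "(\<lambda>z. (-1) * dfree r z) \<in> Rel g" by (rule Rel_smult[OF dfree_Rel[OF r]])
    ultimately show "\<Phi> k (dQ g X) = dQ g (\<Phi> (Suc k) X)"
      unfolding dQ_def Phi_coset unfolding \<Phi>_def
      by (intro coset_eq) simp
  qed
qed




lemma stable_mono: "wd_le A B \<Longrightarrow> stable_graph g A x \<Longrightarrow> stable_graph g B x"
proof -
  assume le: "wd_le A B" and st: "stable_graph g A x"
  obtain ws es m where x: "x = (ws, es, m)" by (cases x) auto
  have "sum A {i. m i = v} \<le> sum B {i. m i = v}" for v
    using le unfolding wd_le_def by (intro sum_mono) auto
  then show ?thesis using st unfolding x stable_graph_def
    by (auto intro: less_le_trans add_left_mono)
qed

lemma valence0: "valence es v = 0 \<Longrightarrow> e \<in> set es \<Longrightarrow> fst e \<noteq> v \<and> snd e \<noteq> v"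
  unfolding valence_def by (auto simp: sum_list_eq_0_iff)

lemma no_isolated:
  assumes wf: "wf_graph g (ws, es, m)" and g: "g \<ge> 1" and v: "v < length ws"
    and val: "valence es v = 0" and w: "ws ! v = 0"
  shows False
proof -
  have wf': "ws \<noteq> []" "\<forall>e\<in>set es. fst e < length ws \<and> snd e < length ws"
     "\<forall>u<length ws. \<forall>v<length ws. (u,v) \<in> (edge_rel es)\<^sup>*"
     "length es + 1 + sum_list ws = length ws + g" using wf unfolding wf_graph_def by auto
  have noe: "(v, u) \<notin> edge_rel es" for u
    using valence0[OF val] unfolding edge_rel_def by force
  have reach: "(v, u) \<in> (edge_rel es)\<^sup>* \<Longrightarrow> u = v" for u
    by (erule converse_rtranclE) (auto simp: noe)
  have L: "length ws = 1"
  proof (rule ccontr)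
    assume "length ws \<noteq> 1"
    then have "length ws \<ge> 2" using v by linarith
    define u where "u = (if v = 0 then 1 else 0::nat)"
    have "u < length ws" "u \<noteq> v" unfolding u_def using \<open>length ws \<ge> 2\<close> by auto
    then show False using wf'(3) v reach by blast
  qed
  have "es = []"
  proof (rule ccontr)
    assume "es \<noteq> []"
    then obtain e where "e \<in> set es" by (cases es) auto
    then show False using wf'(2) valence0[OF val] L v by fastforce
  qed
  moreover have "ws = [0]" using L w v by (cases ws) auto
  ultimately show False using wf'(4) g by simp
qed

lemma sum_card_le: "(\<forall>i. 0 < A i \<and> A i \<le> (1::rat)) \<Longrightarrow> finite S \<Longrightarrow> sum A S \<le> of_nat (card S)"
  using sum_bounded_above[of S A 1] by auto

lemma stable_transfer:
  fixes A B :: "'n::finite \<Rightarrow> rat"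
  assumes g: "g \<ge> 1" and pA: "\<forall>i. 0 < A i \<and> A i \<le> 1" and pB: "\<forall>i. 0 < B i \<and> B i \<le> 1"
    and ch: "\<forall>S. 2 \<le> card S \<longrightarrow> (1 < sum A S \<longleftrightarrow> 1 < sum B S)"
    and st: "stable_graph g A x"
  shows "stable_graph g B x"
proof -
  obtain ws es m where x: "x = (ws, es, m)" by (cases x) auto
  have wf: "wf_graph g (ws, es, m)" using st x unfolding stable_graph_def by simp
  have sv: "0 < 2 * of_nat (ws ! v) - 2 + of_nat (valence es v) + sum A {i. m i = v}"
    if "v < length ws" for v using st x that unfolding stable_graph_def by auto
  have "0 < 2 * of_nat (ws ! v) - 2 + of_nat (valence es v) + sum B {i. m i = v}"
    if v: "v < length ws" for v
  proof -
    let ?S = "{i. m i = v}"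
    let ?w = "ws ! v" let ?d = "valence es v"
    have A0: "sum A ?S \<ge> 0" "sum B ?S \<ge> 0" using pA pB by (auto intro: sum_nonneg less_imp_le)
    have Apos: "sum A ?S > 0 \<Longrightarrow> ?S \<noteq> {}" by (metis less_irrefl sum.empty)
    have Bpos: "?S \<noteq> {} \<Longrightarrow> sum B ?S > 0" using pB by (intro sum_pos) auto
    have s1: "sum A ?S \<le> of_nat (card ?S)" using sum_card_le[OF pA] by simp
    consider "?w = 0 \<and> ?d = 0" | "?w = 0 \<and> ?d = 1" | "2 * ?w + ?d = 2" | "2 * ?w + ?d \<ge> 3"
      by linarith
    then show ?thesis
    proof cases
      case 1 then show ?thesis using no_isolated[OF wf g v] by blast
    next
      case 2
      then have "1 < sum A ?S" using sv[OF v] by simp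
      then have "2 \<le> card ?S" using s1 by (cases "card ?S"; simp; linarith)
      then have "1 < sum B ?S" using ch \<open>1 < sum A ?S\<close> by blast
      then show ?thesis using 2 by simp
    next
      case 3
      then have e: "2 * (of_nat ?w::rat) - 2 + of_nat ?d = 0"
        by (metis (mono_tags, lifting) diff_self of_nat_add of_nat_mult of_nat_numeral add.commute
              add_diff_eq)
      then have "sum A ?S > 0" using sv[OF v] by simp
      then show ?thesis using e Bpos Apos by simp
    next
      case 4
      then have "2 * (of_nat ?w::rat) + of_nat ?d \<ge> 3"
        by (metis of_nat_add of_nat_le_iff of_nat_mult of_nat_numeral)
      then show ?thesis using A0 by linarith
    qed
  qed
  then show ?thesis using wf unfolding x stable_graph_def by simp
qed

lemma chamber_same:
  fixes A B :: "'n::finite \<Rightarrow> rat"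
  assumes Ch: "Ch \<in> chambers g" and a: "emb A \<in> Ch" and b: "emb B \<in> Ch" and S: "2 \<le> card S"
  shows "1 < sum A S \<longleftrightarrow> 1 < sum B S"
proof -
  have conn: "connected Ch" using Ch unfolding chambers_def by (rule in_components_connected)
  have sub: "Ch \<subseteq> D_real g - walls" using Ch unfolding chambers_def by (rule in_components_subset)
  define f where "f = (\<lambda>x::real^'n. \<Sum>i\<in>S. x $ i)"
  have cf: "continuous_on Ch f" unfolding f_def by (intro continuous_intros)
  have cI: "connected (f ` Ch)" by (rule connected_continuous_image[OF cf conn])
  have nw: "x \<in> Ch \<Longrightarrow> f x \<noteq> 1" for x using sub S unfolding walls_def f_def by blast
  have fe: "f (emb C) = of_rat (sum C S)" for C :: "'n \<Rightarrow> rat"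
    unfolding f_def emb_def by (simp add: of_rat_sum)
  have lt: "(1 < (of_rat q::real)) = (1 < q)" for q :: rat
    by (metis of_rat_1 of_rat_less)
  have key: "1 < sum C S \<Longrightarrow> emb C \<in> Ch \<Longrightarrow> emb D \<in> Ch \<Longrightarrow> 1 < sum D S" for C D :: "'n \<Rightarrow> rat"
  proof (rule ccontr)
    assume c: "1 < sum C S" "emb C \<in> Ch" "emb D \<in> Ch" "\<not> 1 < sum D S"
    have "f (emb D) < 1" using nw[OF c(3)] c(4) lt fe by force
    moreover have "f (emb C) > 1" using c(1) lt fe by simp
    ultimately have "1 \<in> f ` Ch" using cI c(2,3) unfolding connected_iff_interval
      by (metis imageI less_imp_le)
    then obtain x where x: "x \<in> Ch" "1 = f x" by blast
    show False using nw[OF x(1)] x(2) by simp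
  qed
  show ?thesis using key a b by blast
qed




lemma GC_eq_stable: "(\<And>x. stable_graph g A x = stable_graph g B x) \<Longrightarrow> GC g A k = GC g B k"
  unfolding GC_def by simp

lemma wd_pos: "weight_datum g A \<Longrightarrow> \<forall>i. 0 < A i \<and> A i \<le> 1"
  unfolding weight_datum_def by blast

lemma same_chamber_GC:
  fixes A B :: "'n::finite \<Rightarrow> rat"
  assumes g: "g \<ge> 1" and pA: "\<forall>i. 0 < A i \<and> A i \<le> 1" and pB: "\<forall>i. 0 < B i \<and> B i \<le> 1"
    and Ch: "Ch \<in> chambers g" "emb A \<in> Ch" "emb B \<in> Ch"
  shows "GC g A k = GC g B k"
proof (rule GC_eq_stable)
  fix x
  have c1: "\<forall>S. 2 \<le> card S \<longrightarrow> (1 < sum A S \<longleftrightarrow> 1 < sum B S)" using chamber_same[OF Ch] by blast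
  have c2: "\<forall>S. 2 \<le> card S \<longrightarrow> (1 < sum B S \<longleftrightarrow> 1 < sum A S)" using c1 by blast
  show "stable_graph g A x = stable_graph g B x"
    using stable_transfer[OF g pA pB c1] stable_transfer[OF g pB pA c2] by blast
qed

lemma GC_iso_cong: "GC_iso g A B \<Longrightarrow> (\<And>k. GC g B k = GC g C k) \<Longrightarrow> GC_iso g A C"
  unfolding GC_iso_def by simp

theorem mainTheorem7:
  fixes g :: nat and A B :: "'n::finite \<Rightarrow> rat"
  assumes "g \<ge> 1" and "weight_datum g A" and "weight_datum g B"
  shows "(wd_le A B \<longrightarrow> GC_subcomplex g A B)
       \<and> ((\<exists>Ch. in_chamber g A Ch \<and> in_chamber g B Ch) \<longrightarrow> (\<forall>k. GC g A k = GC g B k))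
       \<and> ((\<exists>\<sigma>. \<sigma> permutes (UNIV::'n set) \<and> B = A \<circ> \<sigma>) \<longrightarrow> GC_iso g A B)
       \<and> ((\<exists>Ch1 Ch2 \<sigma>. in_chamber g A Ch1 \<and> in_chamber g B Ch2 \<and> \<sigma> permutes (UNIV::'n set)
             \<and> perm_vec \<sigma> ` Ch1 = Ch2) \<longrightarrow> GC_iso g A B)"
proof (intro conjI impI)
  have pA: "\<forall>i. 0 < A i \<and> A i \<le> 1" and pB: "\<forall>i. 0 < B i \<and> B i \<le> 1"
    using assms(2,3) wd_pos by blast+
  show "GC_subcomplex g A B" if le: "wd_le A B"
    unfolding GC_subcomplex_def GC_def
  proof (intro allI subsetI)
    fix k X assume "X \<in> {coset (Rel g) f |f. f \<in> lin_span (delta ` {x. stable_graph g A x \<and> deg x = k})}"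
    moreover have "lin_span (delta ` {x. stable_graph g A x \<and> deg x = k})
       \<subseteq> lin_span (delta ` {x. stable_graph g B x \<and> deg x = k})"
      using stable_mono[OF le] by (intro lin_span_mono) blast
    ultimately show "X \<in> {coset (Rel g) f |f. f \<in> lin_span (delta ` {x. stable_graph g B x \<and> deg x = k})}"
      by blast
  qed
  show "\<forall>k. GC g A k = GC g B k" if "\<exists>Ch. in_chamber g A Ch \<and> in_chamber g B Ch"
    using that same_chamber_GC[OF assms(1) pA pB] unfolding in_chamber_def by blast
  show "GC_iso g A B" if "\<exists>\<sigma>. \<sigma> permutes (UNIV::'n set) \<and> B = A \<circ> \<sigma>"
    using that GC_iso_perm by blast
  show "GC_iso g A B" if h0: "\<exists>Ch1 Ch2 \<sigma>. in_chamber g A Ch1 \<and> in_chamber g B Ch2 \<and> \<sigma> permutes (UNIV::'n set)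
             \<and> perm_vec \<sigma> ` Ch1 = Ch2"
  proof -
    obtain Ch1 Ch2 \<sigma> where h: "in_chamber g A Ch1" "in_chamber g B Ch2" "\<sigma> permutes (UNIV::'n set)"
      "perm_vec \<sigma> ` Ch1 = Ch2" using h0 by blast
    have e: "emb (A \<circ> \<sigma>) = perm_vec \<sigma> (emb A)" unfolding emb_def perm_vec_def by simp
    have "emb (A \<circ> \<sigma>) \<in> Ch2" using h(1,4) unfolding e in_chamber_def by blast
    moreover have "\<forall>i. 0 < (A \<circ> \<sigma>) i \<and> (A \<circ> \<sigma>) i \<le> 1" using pA by simp
    ultimately have "GC g (A \<circ> \<sigma>) k = GC g B k" for k
      using same_chamber_GC[OF assms(1) _ pB] h(2) unfolding in_chamber_def by blast
    then show ?thesis using GC_iso_cong[OF GC_iso_perm[OF h(3)]] by blast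
  qed
qed


end
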